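(* Consider an instance of MinMD$+$OCTC$_{line}$ in which every base station satisfies $y(b_k)\ge 0$ and the base stations $b_1,\dots,b_m$ are indexed in nondecreasing order of $x$-coordinate. Then there exists an optimal solution with the following properties: (i) for each opened base station $b_k$, the destinations of the sensors emitted by $b_k$ are consecutive on $L$, i.e., if $s,s'$ are emitted by $b_k$ then every sensor whose destination lies between the destinations of $s$ and $s'$ on $L$ is also emitted by $b_k$; (ii) if $k<k'$ and both $b_k,b_{k'}$ emit sensors, then every sensor emitted by $b_k$ lies to the left of every sensor emitted by $b_{k'}$ on $L$.
   Context: MinMD$+$OCTC$_{line}$: targets $\mathcal{T}=\{t_1,\dots,t_n\}$ lie on a line $L$, taken as the $x$-axis, so $t_i=(x(t_i),0)$. Base stations $\mathcal{B}=\{b_1,\dots,b_m\}$ are points of the plane, indexed in nondecreasing order of $x$-coordinate, and $b_k$ has an opening cost $c_k\ge 0$. A fixed radius $r\ge 0$ is given. A solution consists of a set of opened base stations and a finite multiset of mobile sensors; each sensor $s$ is emitted by some opened base station $b_k$ and is placed at a destination point on $L$; its moving distance $d_k(s)$ is the Euclidean distance from $b_k$ to the destination of $s$. A sensor covers a target if the target is at Euclidean distance at most $r$ from the sensor's destination. An opened base station may emit arbitrarily many sensors. A solution is feasible if every target is covered by some sensor; its cost is the sum of the opening costs of opened base stations plus the sum of the moving distances of all sensors. The goal is to find a feasible solution of minimum cost. *)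

theory Defs
  imports "HOL-Analysis.Analysis" "HOL-Library.Multiset"
begin

text \<open>The line L is the x-axis of the plane real \<times> real.
  Base stations are indexed 0,...,m-1; station k is at point b k with opening cost c k.
  Targets are given by their x-coordinates (a finite set T of reals), target t is at (t,0).
  A sensor is a pair (k, p): it is emitted by station k and its destination is (p,0) on L.
  A solution is a pair (Opn, S) of a set Opn of opened stations and a finite multiset S of sensors.\<close>

definition move_dist :: "(nat \<Rightarrow> real \<times> real) \<Rightarrow> nat \<times> real \<Rightarrow> real" where
  "move_dist b s = dist (b (fst s)) (snd s, 0)"

definition covers :: "real \<Rightarrow> nat \<times> real \<Rightarrow> real \<Rightarrow> bool" where
  "covers r s t \<longleftrightarrow> dist (snd s, 0::real) (t, 0) \<le> r"

definition feasible :: "nat \<Rightarrow> real set \<Rightarrow> real \<Rightarrow> nat set \<Rightarrow> (nat \<times> real) multiset \<Rightarrow> bool" where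
  "feasible m T r Opn S \<longleftrightarrow>
     Opn \<subseteq> {..<m} \<and> (\<forall>s\<in>#S. fst s \<in> Opn) \<and> (\<forall>t\<in>T. \<exists>s\<in>#S. covers r s t)"

definition cost :: "(nat \<Rightarrow> real) \<Rightarrow> (nat \<Rightarrow> real \<times> real) \<Rightarrow> nat set \<Rightarrow> (nat \<times> real) multiset \<Rightarrow> real" where
  "cost c b Opn S = (\<Sum>k\<in>Opn. c k) + sum_mset (image_mset (move_dist b) S)"

definition optimal :: "nat \<Rightarrow> real set \<Rightarrow> real \<Rightarrow> (nat \<Rightarrow> real) \<Rightarrow> (nat \<Rightarrow> real \<times> real)
    \<Rightarrow> nat set \<Rightarrow> (nat \<times> real) multiset \<Rightarrow> bool" where
  "optimal m T r c b Opn S \<longleftrightarrow> feasible m T r Opn S \<and>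
     (\<forall>Opn' S'. feasible m T r Opn' S' \<longrightarrow> cost c b Opn S \<le> cost c b Opn' S')"

end

theory Submission
  imports Defs
begin

lemma dist_line: "dist (z::real\<times>real) (q,0) = sqrt ((fst z - q)^2 + (snd z)^2)"
  by (cases z) (simp add: dist_Pair_Pair dist_real_def)

lemma covers_iff: "covers r s t \<longleftrightarrow> \<bar>snd s - t\<bar> \<le> r"
  by (simp add: covers_def dist_Pair_Pair dist_real_def)

definition near :: "(nat \<Rightarrow> real \<times> real) \<Rightarrow> nat set \<Rightarrow> real \<Rightarrow> nat" where
  "near b Op p = (LEAST k. k \<in> Op \<and> (\<forall>j\<in>Op. dist (b k) (p,0) \<le> dist (b j) (p,0)))"

lemma near_props:
  assumes "finite Op" "Op \<noteq> {}"
  shows "near b Op p \<in> Op \<and> (\<forall>j\<in>Op. dist (b (near b Op p)) (p,0) \<le> dist (b j) (p,0))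
     \<and> (\<forall>j\<in>Op. j < near b Op p \<longrightarrow> dist (b (near b Op p)) (p,0) < dist (b j) (p,0))"
proof -
  let ?P = "\<lambda>k. k \<in> Op \<and> (\<forall>j\<in>Op. dist (b k) (p,0) \<le> dist (b j) (p,0))"
  let ?v = "Min ((\<lambda>j. dist (b j) (p,0)) ` Op)"
  have "?v \<in> (\<lambda>j. dist (b j) (p,0)) ` Op" using assms by simp
  then obtain k where k: "k \<in> Op" "dist (b k) (p,0) = ?v" by auto
  have "?P k" using k assms by auto
  hence P1: "?P (near b Op p)" unfolding near_def by (rule LeastI)
  moreover have "\<forall>j\<in>Op. j < near b Op p \<longrightarrow> dist (b (near b Op p)) (p,0) < dist (b j) (p,0)"
  proof (intro ballI impI)
    fix j assume j: "j \<in> Op" "j < near b Op p"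
    hence "\<not> ?P j" unfolding near_def using not_less_Least by blast
    with j P1 show "dist (b (near b Op p)) (p,0) < dist (b j) (p,0)"
      by (meson linorder_not_le order_trans)
  qed
  ultimately show ?thesis by blast
qed

lemma near_mono:
  assumes "finite Op" "Op \<noteq> {}" "Op \<subseteq> {..<m}"
    and ord: "\<forall>k k'. k \<le> k' \<longrightarrow> k' < m \<longrightarrow> fst (b k) \<le> fst (b k')"
    and pp: "p \<le> p'"
  shows "near b Op p \<le> near b Op p'"
proof (rule ccontr)
  assume "\<not> ?thesis"
  hence kj: "near b Op p' < near b Op p" by simp
  define j where "j = near b Op p"
  define k where "k = near b Op p'"
  have A: "near b Op p \<in> Op \<and> (\<forall>j\<in>Op. dist (b (near b Op p)) (p,0) \<le> dist (b j) (p,0))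
     \<and> (\<forall>j\<in>Op. j < near b Op p \<longrightarrow> dist (b (near b Op p)) (p,0) < dist (b j) (p,0))"
    using near_props[OF assms(1,2)] by blast
  have B: "near b Op p' \<in> Op \<and> (\<forall>j\<in>Op. dist (b (near b Op p')) (p',0) \<le> dist (b j) (p',0))"
    using near_props[OF assms(1,2)] by blast
  have jO: "j \<in> Op" and kO: "k \<in> Op" using A B j_def k_def by auto
  have "k < j" using kj j_def k_def by simp
  hence d1: "dist (b j) (p,0) < dist (b k) (p,0)" using A kO j_def by auto
  have d2: "dist (b k) (p',0) \<le> dist (b j) (p',0)" using B jO k_def by auto
  have xk: "fst (b k) \<le> fst (b j)" using ord \<open>k < j\<close> jO assms(3) by auto
  define xk where "xk = fst (b k)"
  define xj where "xj = fst (b j)"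
  define yk where "yk = snd (b k)"
  define yj where "yj = snd (b j)"
  have e1: "(xj - p)^2 + yj^2 < (xk - p)^2 + yk^2"
    using d1 unfolding dist_line xk_def xj_def yk_def yj_def
    by (simp add: real_sqrt_less_iff)
  have e2: "(xk - p')^2 + yk^2 \<le> (xj - p')^2 + yj^2"
    using d2 unfolding dist_line xk_def xj_def yk_def yj_def
    by simp
  have "xk \<le> xj" using xk xk_def xj_def by simp
  have "p \<noteq> p'" using e1 e2 by auto
  hence "p < p'" using pp by simp
  have "(p' - p) * (2*xk - p - p') > (p' - p) * (2*xj - p - p')"
    using e1 e2 by (simp add: power2_eq_square algebra_simps)
  hence "2*xk - p - p' > 2*xj - p - p'" using \<open>p < p'\<close>
    by (simp add: mult_less_cancel_left)
  with \<open>xk \<le> xj\<close> show False by simp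
qed


definition cl :: "(nat \<Rightarrow> real \<times> real) \<Rightarrow> real \<Rightarrow> real set \<Rightarrow> nat \<Rightarrow> real" where
  "cl b r G k = max (Max G - r) (min (Min G + r) (fst (b k)))"

definition Qset :: "(nat \<Rightarrow> real \<times> real) \<Rightarrow> real set \<Rightarrow> real \<Rightarrow> nat \<Rightarrow> real set" where
  "Qset b T r m = (\<lambda>(G,k). cl b r G k) ` ((Pow T - {{}}) \<times> {..<m})"

definition Smk :: "(nat \<Rightarrow> real \<times> real) \<Rightarrow> nat set \<Rightarrow> real set \<Rightarrow> (nat \<times> real) multiset" where
  "Smk b Op P = mset_set ((\<lambda>p. (near b Op p, p)) ` P)"

lemma finite_Qset: "finite T \<Longrightarrow> finite (Qset b T r m)"
  unfolding Qset_def by simp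

lemma set_le_mset:
  fixes h :: "'a \<Rightarrow> real"
  assumes "\<forall>x\<in>#M. h x \<ge> 0"
  shows "(\<Sum>x\<in>set_mset M. h x) \<le> sum_mset (image_mset h M)"
  using assms
proof (induction M)
  case empty
  then show ?case by simp
next
  case (add x M)
  show ?case
  proof (cases "x \<in># M")
    case True
    then have "(\<Sum>x\<in>set_mset (add_mset x M). h x) = (\<Sum>x\<in>set_mset M. h x)"
      by (simp add: insert_absorb)
    also have "\<dots> \<le> sum_mset (image_mset h M)" using add by simp
    also have "\<dots> \<le> sum_mset (image_mset h (add_mset x M))" using add by simp
    finally show ?thesis .
  next
    case False
    then show ?thesis using add by simp
  qed
qed

lemma cl_props:
  assumes "finite G" "G \<noteq> {}" "\<forall>t\<in>G. \<bar>p - t\<bar> \<le> r"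
  shows "(\<forall>t\<in>G. \<bar>cl b r G k - t\<bar> \<le> r) \<and> dist (b k) (cl b r G k, 0) \<le> dist (b k) (p, 0)"
proof -
  have "\<bar>p - Max G\<bar> \<le> r" using assms Max_in[OF assms(1,2)] by blast
  hence lo: "Max G - r \<le> p" by linarith
  have "\<bar>p - Min G\<bar> \<le> r" using assms Min_in[OF assms(1,2)] by blast
  hence hi: "p \<le> Min G + r" by linarith
  let ?q = "cl b r G k"
  have q1: "Max G - r \<le> ?q" "?q \<le> Min G + r" using lo hi unfolding cl_def by auto
  have cov: "\<forall>t\<in>G. \<bar>?q - t\<bar> \<le> r"
  proof
    fix t assume t: "t \<in> G"
    have "t \<le> Max G" "Min G \<le> t" using t assms(1) by auto
    thus "\<bar>?q - t\<bar> \<le> r" using q1 by linarith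
  qed
  have "\<bar>fst (b k) - ?q\<bar> \<le> \<bar>fst (b k) - p\<bar>" using lo hi unfolding cl_def by linarith
  hence "(fst (b k) - ?q)^2 \<le> (fst (b k) - p)^2"
    by (simp add: abs_le_square_iff)
  hence "dist (b k) (?q, 0) \<le> dist (b k) (p, 0)" unfolding dist_line by simp
  with cov show ?thesis by blast
qed

lemma stepA:
  assumes fe: "feasible m T r Op S" and fT: "finite T"
  shows "\<exists>P. P \<subseteq> Qset b T r m \<and> feasible m T r Op (Smk b Op P) \<and>
     cost c b Op (Smk b Op P) \<le> cost c b Op S"
proof -
  have OpM: "Op \<subseteq> {..<m}" and Sin: "\<forall>s\<in>#S. fst s \<in> Op" and cv: "\<forall>t\<in>T. \<exists>s\<in>#S. covers r s t"
    using fe unfolding feasible_def by auto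
  have fO: "finite Op" using OpM finite_subset by blast
  define Gs where "Gs s = {t\<in>T. covers r s t}" for s
  define qf where "qf s = cl b r (Gs s) (fst s)" for s
  define A where "A = {s \<in> set_mset S. Gs s \<noteq> {}}"
  define P where "P = qf ` A"
  define md where "md = move_dist b"
  have fA: "finite A" unfolding A_def by simp
  have fG: "finite (Gs s)" for s using fT unfolding Gs_def by simp
  have clA: "\<forall>t\<in>Gs s. \<bar>qf s - t\<bar> \<le> r \<and> dist (b (fst s)) (qf s, 0) \<le> dist (b (fst s)) (snd s, 0)"
    if "s \<in> A" for s
  proof -
    have "Gs s \<noteq> {}" using that A_def by simp
    moreover have "\<forall>t\<in>Gs s. \<bar>snd s - t\<bar> \<le> r" unfolding Gs_def covers_iff by simp
    ultimately have "(\<forall>t\<in>Gs s. \<bar>cl b r (Gs s) (fst s) - t\<bar> \<le> r) \<and>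
       dist (b (fst s)) (cl b r (Gs s) (fst s), 0) \<le> dist (b (fst s)) (snd s, 0)"
      by (rule cl_props[OF fG])
    thus ?thesis unfolding qf_def by simp
  qed
  have clD: "dist (b (fst s)) (qf s, 0) \<le> dist (b (fst s)) (snd s, 0)" if "s \<in> A" for s
  proof -
    have "Gs s \<noteq> {}" using that unfolding A_def by simp
    then obtain t where "t \<in> Gs s" by blast
    thus ?thesis using clA[OF that] by blast
  qed
  have PQ: "P \<subseteq> Qset b T r m"
  proof
    fix q assume "q \<in> P"
    then obtain s where s: "s \<in> A" "q = qf s" using P_def by auto
    have "Gs s \<in> Pow T - {{}}" using s A_def Gs_def by auto
    moreover have "fst s < m" using s A_def Sin OpM by auto
    ultimately have "(Gs s, fst s) \<in> (Pow T - {{}}) \<times> {..<m}" by simp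
    hence "(\<lambda>(G,k). cl b r G k) (Gs s, fst s) \<in> Qset b T r m" unfolding Qset_def by (rule imageI)
    thus "q \<in> Qset b T r m" unfolding s(2) qf_def by simp
  qed
  have fP: "finite P" using fA P_def by simp
  show ?thesis
  proof (intro exI conjI)
    show "P \<subseteq> Qset b T r m" by (rule PQ)
    show "feasible m T r Op (Smk b Op P)"
      unfolding feasible_def
    proof (intro conjI ballI)
      show "Op \<subseteq> {..<m}" by (rule OpM)
    next
      fix s assume "s \<in># Smk b Op P"
      then obtain p where p: "p \<in> P" "s = (near b Op p, p)" using fP unfolding Smk_def by auto
      then obtain s0 where "s0 \<in> A" using P_def by auto
      hence "Op \<noteq> {}" using A_def Sin by auto
      thus "fst s \<in> Op" using near_props[OF fO] p by simp
    next
      fix t assume t: "t \<in> T"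
      then obtain s where s: "s \<in># S" "covers r s t" using cv by auto
      hence sA: "s \<in> A" "t \<in> Gs s" using A_def Gs_def t by auto
      have "(near b Op (qf s), qf s) \<in># Smk b Op P" using fP sA unfolding Smk_def P_def by auto
      moreover have "covers r (near b Op (qf s), qf s) t" using clA[OF sA(1)] sA(2) covers_iff by simp
      ultimately show "\<exists>s\<in>#Smk b Op P. covers r s t" by blast
    qed
    show "cost c b Op (Smk b Op P) \<le> cost c b Op S"
    proof -
      have nn: "\<forall>x. md x \<ge> 0" unfolding md_def move_dist_def by simp
      have inj: "inj_on (\<lambda>p. (near b Op p, p)) P" by (rule inj_onI) simp
      have "sum_mset (image_mset md (Smk b Op P)) = (\<Sum>x\<in>(\<lambda>p. (near b Op p, p)) ` P. md x)"
        unfolding Smk_def by (rule sum_unfold_sum_mset[symmetric])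
      also have "\<dots> = (\<Sum>p\<in>P. md (near b Op p, p))" using inj by (simp add: sum.reindex)
      also have "\<dots> \<le> (\<Sum>s\<in>A. md (near b Op (qf s), qf s))"
        unfolding P_def using sum_image_le[OF fA, of "\<lambda>p. md (near b Op p, p)" qf] nn
        by (simp add: comp_def)
      also have "\<dots> \<le> (\<Sum>s\<in>A. md s)"
      proof (rule sum_mono)
        fix s assume sA: "s \<in> A"
        have "fst s \<in> Op" using sA A_def Sin by auto
        hence "Op \<noteq> {}" by auto
        hence "dist (b (near b Op (qf s))) (qf s, 0) \<le> dist (b (fst s)) (qf s, 0)"
          using near_props[OF fO] \<open>fst s \<in> Op\<close> by blast
        also have "\<dots> \<le> dist (b (fst s)) (snd s, 0)" using clD[OF sA] .
        finally show "md (near b Op (qf s), qf s) \<le> md s" unfolding md_def move_dist_def by simp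
      qed
      also have "\<dots> \<le> (\<Sum>s\<in>set_mset S. md s)"
        by (rule sum_mono2) (auto simp: A_def nn)
      also have "\<dots> \<le> sum_mset (image_mset md S)" by (rule set_le_mset) (simp add: nn)
      finally show ?thesis unfolding cost_def md_def by simp
    qed
  qed
qed

theorem lemma2:
  fixes m :: nat and T :: "real set" and r :: real
    and c :: "nat \<Rightarrow> real" and b :: "nat \<Rightarrow> real \<times> real"
  assumes "finite T" and "r \<ge> 0" and "m \<ge> 1"
    and "\<forall>k<m. c k \<ge> 0"
    and "\<forall>k<m. snd (b k) \<ge> 0"
    and "\<forall>k k'. k \<le> k' \<longrightarrow> k' < m \<longrightarrow> fst (b k) \<le> fst (b k')"
  shows "\<exists>Opn S. optimal m T r c b Opn S \<and>
    (\<forall>s\<in>#S. \<forall>s'\<in>#S. \<forall>s''\<in>#S.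
        fst s = fst s' \<and> snd s \<le> snd s'' \<and> snd s'' \<le> snd s' \<longrightarrow> fst s'' = fst s) \<and>
    (\<forall>s\<in>#S. \<forall>s'\<in>#S. fst s < fst s' \<longrightarrow> snd s < snd s')"
proof -
  define Q where "Q = Qset b T r m"
  define F where "F = {(Op, P). Op \<subseteq> {..<m} \<and> P \<subseteq> Q \<and> feasible m T r Op (Smk b Op P)}"
  define f where "f = (\<lambda>(Op, P). cost c b Op (Smk b Op P))"
  have fQ: "finite Q" using finite_Qset[OF assms(1)] Q_def by simp
  have "F \<subseteq> Pow {..<m} \<times> Pow Q" unfolding F_def by auto
  hence fF: "finite F" using fQ finite_subset by blast
  have triv: "feasible m T r {0} (mset_set ((\<lambda>t. (0, t)) ` T))"
    unfolding feasible_def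
  proof (intro conjI ballI)
    show "{0} \<subseteq> {..<m}" using assms(3) by auto
  next
    fix s assume "s \<in># mset_set ((\<lambda>t. (0::nat, t)) ` T)"
    thus "fst s \<in> {0}" using assms(1) by auto
  next
    fix t assume t: "t \<in> T"
    have "(0, t) \<in># mset_set ((\<lambda>t. (0::nat, t)) ` T)" using t assms(1) by simp
    moreover have "covers r (0, t) t" using assms(2) by (simp add: covers_iff)
    ultimately show "\<exists>s\<in>#mset_set ((\<lambda>t. (0::nat, t)) ` T). covers r s t" by blast
  qed
  from stepA[OF triv assms(1), of b c] obtain P0 where
    "P0 \<subseteq> Q" "feasible m T r {0} (Smk b {0} P0)" unfolding Q_def by blast
  hence "({0}, P0) \<in> F" unfolding F_def using assms(3) by auto
  hence neF: "F \<noteq> {}" by blast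
  have "Min (f ` F) \<in> f ` F" using fF neF by simp
  then obtain Op P where OP: "(Op, P) \<in> F" "f (Op, P) = Min (f ` F)" by auto
  have minF: "f (Op, P) \<le> f y" if "y \<in> F" for y using OP(2) fF that by simp
  have feas: "feasible m T r Op (Smk b Op P)" and OpM: "Op \<subseteq> {..<m}" and PQ: "P \<subseteq> Q"
    using OP(1) F_def by auto
  have fP: "finite P" using PQ fQ finite_subset by blast
  have fO: "finite Op" using OpM finite_subset by blast
  have opt: "optimal m T r c b Op (Smk b Op P)"
    unfolding optimal_def
  proof (intro conjI allI impI)
    show "feasible m T r Op (Smk b Op P)" by (rule feas)
    fix Op' S' assume fe': "feasible m T r Op' S'"
    from stepA[OF fe' assms(1), of b c] obtain P' where
      P': "P' \<subseteq> Q" "feasible m T r Op' (Smk b Op' P')" "cost c b Op' (Smk b Op' P') \<le> cost c b Op' S'"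
      unfolding Q_def by blast
    have "(Op', P') \<in> F" using P' fe' unfolding F_def feasible_def by auto
    hence "f (Op, P) \<le> f (Op', P')" by (rule minF)
    thus "cost c b Op (Smk b Op P) \<le> cost c b Op' S'" using P'(3) unfolding f_def by simp
  qed
  have memS: "\<exists>p\<in>P. s = (near b Op p, p)" if "s \<in># Smk b Op P" for s
    using that fP unfolding Smk_def by auto
  have mono: "near b Op p \<le> near b Op p'" if "p \<le> p'" "Op \<noteq> {}" for p p'
    using near_mono[OF fO that(2) OpM assms(6) that(1)] .
  have neO: "Op \<noteq> {}" if "s \<in># Smk b Op P" for s
    using feas that unfolding feasible_def by auto
  show ?thesis
  proof (intro exI conjI)
    show "optimal m T r c b Op (Smk b Op P)" by (rule opt)
    show "\<forall>s\<in>#Smk b Op P. \<forall>s'\<in>#Smk b Op P. \<forall>s''\<in>#Smk b Op P.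
        fst s = fst s' \<and> snd s \<le> snd s'' \<and> snd s'' \<le> snd s' \<longrightarrow> fst s'' = fst s"
    proof (intro ballI impI)
      fix s s' s'' assume a: "s \<in># Smk b Op P" "s' \<in># Smk b Op P" "s'' \<in># Smk b Op P"
        and h: "fst s = fst s' \<and> snd s \<le> snd s'' \<and> snd s'' \<le> snd s'"
      obtain p where p: "s = (near b Op p, p)" using memS[OF a(1)] by blast
      obtain p' where p': "s' = (near b Op p', p')" using memS[OF a(2)] by blast
      obtain p'' where p'': "s'' = (near b Op p'', p'')" using memS[OF a(3)] by blast
      have ne: "Op \<noteq> {}" using neO[OF a(1)] .
      have h1: "p \<le> p''" "p'' \<le> p'" "near b Op p = near b Op p'" using h p p' p'' by auto
      have "near b Op p \<le> near b Op p''" using mono[OF h1(1) ne] .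
      moreover have "near b Op p'' \<le> near b Op p'" using mono[OF h1(2) ne] .
      ultimately show "fst s'' = fst s" using h1(3) p p'' by simp
    qed
    show "\<forall>s\<in>#Smk b Op P. \<forall>s'\<in>#Smk b Op P. fst s < fst s' \<longrightarrow> snd s < snd s'"
    proof (intro ballI impI)
      fix s s' assume a: "s \<in># Smk b Op P" "s' \<in># Smk b Op P" and h: "fst s < fst s'"
      obtain p where p: "s = (near b Op p, p)" using memS[OF a(1)] by blast
      obtain p' where p': "s' = (near b Op p', p')" using memS[OF a(2)] by blast
      have ne: "Op \<noteq> {}" using neO[OF a(1)] .
      have hn: "near b Op p < near b Op p'" using h p p' by simp
      show "snd s < snd s'"
      proof (rule ccontr)
        assume "\<not> snd s < snd s'"
        hence "p' \<le> p" using p p' by simp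
        hence "near b Op p' \<le> near b Op p" using mono[OF _ ne] by blast
        with hn show False by simp
      qed
    qed
  qed
qed
end
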